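(* Let $A\in\mathbb{R}^{n\times n}$, let $\bar T\ge1$ be an integer, let $\mathcal{W}\subset\mathbb{R}^n$ be a closed convex set with $0\in\mathcal{W}$, and let $\mathrm{sat}(\cdot|\mathcal{W}):\mathbb{R}^n\to\mathcal{W}$ be a map with $|\mathrm{sat}(w|\mathcal{W})-w|=\min\{|w'|:w+w'\in\mathcal{W}\}$ for all $w$. Define $\bar\eta=\sup\{\eta\ge0:\mathcal{B}_\eta\subset\mathcal{W}\}$, where $\mathcal{B}_\eta=\{w:|w|<\eta\}$, and assume $\bar\eta>0$. For $\mathbf{w}\in\ell^n$ define $\hat{\mathbf{w}}\in\ell^n$ recursively by $\hat w_t=w_t$ for $t<\bar T$ and $$\hat w_t=A^{\bar T}\big(\hat w_{t-\bar T}-\mathrm{sat}(\hat w_{t-\bar T}|\mathcal{W})\big)+w_t\quad(t\ge\bar T).$$ Let $p\in\{1,2,\dots\}\cup\{\infty\}$. Then: (1) for every $0\le\gamma<\min\{1,|A^{\bar T}|\}$: if $\|\mathbf{w}\|_p\le(1-\gamma)\frac{|A^{\bar T}|\,\bar\eta}{|A^{\bar T}|-\gamma}$, then $\|\hat{\mathbf{w}}\|_p\le\frac{1}{1-\gamma}\|\mathbf{w}\|_p$; (2) if $|A^{\bar T}|<1$, then for all $\mathbf{w}\in\ell^n_p$, $\|\hat{\mathbf{w}}\|_p\le\frac{1}{1-|A^{\bar T}|}\|\mathbf{w}\|_p$.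
   Context: $|\cdot|$ is a fixed norm on $\mathbb{R}^n$ and, for matrices, $|A|$ is the induced operator norm. $\ell^n$ is the space of sequences in $\mathbb{R}^n$, $\|\mathbf{x}\|_p=(\sum_k|x_k|^p)^{1/p}$ for $p<\infty$, $\|\mathbf{x}\|_\infty=\sup_k|x_k|$, $\ell^n_p=\{\mathbf{x}:\|\mathbf{x}\|_p<\infty\}$. (In the paper, $\hat{\mathbf{w}}$ is the internal state of a "blended" system level controller in closed loop with the saturated linear system $x_t=Ax_{t-1}+B\,\mathrm{sat}(u_{t-1}|\mathcal{U})+w_t$, whose dynamics reduce to the displayed recursion.) *)

theory Defs
  imports "HOL-Analysis.Analysis" "HOL-Library.Extended_Nat" "HOL-Library.Extended_Real"
begin

definition is_norm :: "(real^'n \<Rightarrow> real) \<Rightarrow> bool" where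
  "is_norm N \<longleftrightarrow> (\<forall>x. N x = 0 \<longleftrightarrow> x = 0) \<and> (\<forall>c x. N (c *\<^sub>R x) = \<bar>c\<bar> * N x)
     \<and> (\<forall>x y. N (x + y) \<le> N x + N y)"

definition opnorm :: "(real^'n \<Rightarrow> real) \<Rightarrow> real^'n^'n \<Rightarrow> real" where
  "opnorm N M = Sup {N (M *v x) | x. N x \<le> 1}"

primrec matpow :: "real^'n^'n \<Rightarrow> nat \<Rightarrow> real^'n^'n" where
  "matpow M 0 = mat 1"
| "matpow M (Suc k) = M ** matpow M k"

definition lpnorm :: "(real^'n \<Rightarrow> real) \<Rightarrow> enat \<Rightarrow> (nat \<Rightarrow> real^'n) \<Rightarrow> ereal" where
  "lpnorm N p x = (case p of
      enat q \<Rightarrow> (if summable (\<lambda>k. N (x k) ^ q)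
                 then ereal ((\<Sum>k. N (x k) ^ q) powr (1 / real q)) else \<infinity>)
    | \<infinity> \<Rightarrow> (SUP k. ereal (N (x k))))"

definition etabar :: "(real^'n \<Rightarrow> real) \<Rightarrow> (real^'n) set \<Rightarrow> ereal" where
  "etabar N W = Sup {ereal \<eta> | \<eta>. \<eta> \<ge> 0 \<and> {w. N w < \<eta>} \<subseteq> W}"

end

theory Submission
  imports Defs
begin

lemma pow_convex:
  fixes x y c :: real and q :: nat
  assumes "0\<le>x" "0\<le>y" "0\<le>c" "c\<le>1"
  shows "(c*x + (1-c)*y)^q \<le> c*x^q + (1-c)*y^q"
proof -
  have cv: "convex_on {0::real..} (\<lambda>x. x^q)"
  proof (cases "even q")
    case True thus ?thesis using convex_power_even convex_on_subset by blast
  next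
    case False thus ?thesis using convex_power_odd by blast
  qed
  have "((1 - (1-c)) *\<^sub>R x + (1-c) *\<^sub>R y)^q \<le> (1 - (1-c)) * x^q + (1-c) * y^q"
    using convex_onD[OF cv, of "1-c" x y] assms by auto
  thus ?thesis by simp
qed

lemma pow_powr_inv:
  fixes y :: real
  assumes "0 \<le> y" "1 \<le> q"
  shows "(y ^ q) powr (1 / real q) = y"
proof (cases "y = 0")
  case True thus ?thesis using assms by simp
next
  case False
  hence "y > 0" using assms by simp
  hence "y ^ q = y powr real q" by (simp add: powr_realpow)
  thus ?thesis using assms \<open>y>0\<close> by (simp add: powr_powr)
qed

context
  fixes N :: "real^'n \<Rightarrow> real"
  assumes nN: "is_norm N"
begin

lemma N0: "N 0 = 0" using nN unfolding is_norm_def by auto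
lemma Nscale: "N (c *\<^sub>R x) = \<bar>c\<bar> * N x" using nN unfolding is_norm_def by auto
lemma Ntri: "N (x + y) \<le> N x + N y" using nN unfolding is_norm_def by auto
lemma Nzero: "N x = 0 \<longleftrightarrow> x = 0" using nN unfolding is_norm_def by auto
lemma Nminus: "N (- x) = N x" using Nscale[of "-1" x] by simp
lemma Ndiff: "N (x - y) = N (y - x)" using Nminus[of "y - x"] by simp
lemma Nge0: "0 \<le> N x"
proof -
  have "N 0 \<le> N x + N (-x)" using Ntri[of x "-x"] by simp
  thus ?thesis using N0 Nminus by simp
qed

lemma Nsum: "finite S \<Longrightarrow> N (sum f S) \<le> (\<Sum>i\<in>S. N (f i))"
proof (induction S rule: finite_induct)
  case empty thus ?case by (simp add: N0)
next
  case (insert a S)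
  thus ?case using Ntri[of "f a" "sum f S"] by simp
qed

lemma Nupper: "\<exists>C\<ge>0. \<forall>x. N x \<le> C * norm x"
proof -
  define C where "C = (\<Sum>i\<in>UNIV. N (axis i (1::real)))"
  have "N x \<le> C * norm x" for x
  proof -
    have "x = (\<Sum>i\<in>UNIV. (x$i) *\<^sub>R axis i 1)"
      using basis_expansion[of x] by (simp add: scalar_mult_eq_scaleR)
    hence "N x \<le> (\<Sum>i\<in>UNIV. N ((x$i) *\<^sub>R axis i 1))"
      using Nsum[of UNIV "\<lambda>i. (x$i) *\<^sub>R axis i 1"] by simp
    also have "\<dots> = (\<Sum>i\<in>UNIV. \<bar>x$i\<bar> * N (axis i 1))" by (simp add: Nscale)
    also have "\<dots> \<le> (\<Sum>i\<in>UNIV. norm x * N (axis i 1))"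
      by (rule sum_mono, rule mult_right_mono, simp add: component_le_norm_cart, simp add: Nge0)
    also have "\<dots> = C * norm x" by (simp add: C_def sum_distrib_left mult.commute)
    finally show ?thesis .
  qed
  moreover have "C \<ge> 0" unfolding C_def by (rule sum_nonneg, simp add: Nge0)
  ultimately show ?thesis by blast
qed

lemma Nlower: "\<exists>c>0. \<forall>x. c * norm x \<le> N x"
proof -
  obtain C where C: "C \<ge> 0" "\<forall>x. N x \<le> C * norm x" using Nupper by blast
  have "C-lipschitz_on UNIV N"
  proof (rule lipschitz_onI)
    fix x y :: "real^'n"
    have "N x \<le> N y + N (x - y)" using Ntri[of y "x - y"] by simp
    moreover have "N y \<le> N x + N (y - x)" using Ntri[of x "y - x"] by simp
    ultimately have "\<bar>N x - N y\<bar> \<le> N (x - y)" using Ndiff[of x y] by linarith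
    also have "\<dots> \<le> C * dist x y" using C by (simp add: dist_norm)
    finally show "dist (N x) (N y) \<le> C * dist x y" by (simp add: dist_real_def)
  qed (use C in auto)
  hence cont: "continuous_on (sphere 0 1) N"
    using lipschitz_on_continuous_on continuous_on_subset by blast
  have ne: "sphere (0::real^'n) 1 \<noteq> {}"
  proof -
    have "axis undefined (1::real) \<in> sphere (0::real^'n) 1" by (simp add: sphere_def dist_norm)
    thus ?thesis by blast
  qed
  obtain x0 where x0: "x0 \<in> sphere 0 1" "\<forall>y\<in>sphere 0 1. N x0 \<le> N y"
    using continuous_attains_inf[OF compact_sphere ne cont] by blast
  have "x0 \<noteq> 0" using x0 by auto
  hence pos: "N x0 > 0" using Nzero[of x0] Nge0[of x0] by linarith
  have "N x0 * norm x \<le> N x" for x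
  proof (cases "x = 0")
    case True thus ?thesis by (simp add: N0)
  next
    case False
    hence nx: "norm x > 0" by simp
    have "(1 / norm x) *\<^sub>R x \<in> sphere 0 1" using nx by (simp add: sphere_def dist_norm)
    hence "N x0 \<le> N ((1 / norm x) *\<^sub>R x)" using x0 by blast
    also have "\<dots> = N x / norm x" by (simp add: Nscale)
    finally show ?thesis using nx by (simp add: field_simps)
  qed
  thus ?thesis using pos by (auto simp: mult.commute)
qed

lemma opnorm_bdd: "bdd_above {N (M *v x) | x. N x \<le> 1}"
proof -
  obtain C where C: "C \<ge> 0" "\<forall>x. N x \<le> C * norm x" using Nupper by blast
  obtain c where c: "c > 0" "\<forall>x. c * norm x \<le> N x" using Nlower by blast
  obtain K where K: "K \<ge> 0" "\<forall>x. norm (M *v x) \<le> norm x * K"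
    using bounded_linear.nonneg_bounded[OF matrix_vector_mul_bounded_linear[of M]] by blast
  have "N (M *v x) \<le> C * K / c" if "N x \<le> 1" for x
  proof -
    have "norm x \<le> 1 / c" proof -
      have "c * norm x \<le> 1" using c that by (meson order_trans)
      thus ?thesis using c by (simp add: field_simps)
    qed
    have "N (M *v x) \<le> C * (norm x * K)" proof -
      have "N (M *v x) \<le> C * norm (M *v x)" using C by blast
      also have "\<dots> \<le> C * (norm x * K)" using C K by (simp add: mult_left_mono)
      finally show ?thesis .
    qed
    also have "\<dots> \<le> C * ((1/c) * K)" using C K \<open>norm x \<le> 1/c\<close> by (intro mult_left_mono mult_right_mono) auto
    finally show ?thesis by simp
  qed
  thus ?thesis unfolding bdd_above_def by blast
qed

lemma opnorm_ge0: "0 \<le> opnorm N M"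
proof -
  have "N (M *v 0) = N (M *v 0) \<and> N (0::real^'n) \<le> 1" using N0 by simp
  hence "N (M *v 0) \<in> {N (M *v x) | x. N x \<le> 1}" by blast
  hence "N (M *v 0) \<le> opnorm N M" unfolding opnorm_def by (rule cSup_upper[OF _ opnorm_bdd])
  thus ?thesis using N0 by simp
qed

lemma opnorm_le: "N (M *v x) \<le> opnorm N M * N x"
proof (cases "x = 0")
  case True thus ?thesis using N0 by simp
next
  case False
  hence nx: "N x > 0" using Nzero[of x] Nge0[of x] by linarith
  let ?y = "(1 / N x) *\<^sub>R x"
  have "N ?y = 1" using nx by (simp add: Nscale)
  hence "N (M *v ?y) = N (M *v ?y) \<and> N ?y \<le> 1" by simp
  hence "N (M *v ?y) \<in> {N (M *v x) | x. N x \<le> 1}" by blast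
  hence "N (M *v ?y) \<le> opnorm N M" unfolding opnorm_def by (rule cSup_upper[OF _ opnorm_bdd])
  moreover have "N (M *v ?y) = N (M *v x) / N x" using nx by (simp add: matrix_vector_mult_scaleR Nscale)
  ultimately show ?thesis using nx by (simp add: field_simps)
qed

end
lemma sum_shift_le:
  fixes g :: "nat \<Rightarrow> real"
  assumes "\<forall>s. 0 \<le> g s"
  shows "(\<Sum>t<n. (if T \<le> t then g (t - T) else 0)) \<le> (\<Sum>t<n. g t)"
proof -
  have "(\<Sum>t<n. (if T \<le> t then g (t - T) else 0)) = (\<Sum>s<n - T. g s)"
  proof (induction n)
    case 0 thus ?case by simp
  next
    case (Suc n)
    show ?case
    proof (cases "T \<le> n")
      case True
      hence "Suc n - T = Suc (n - T)" by simp
      thus ?thesis using Suc True by simp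
    next
      case False
      hence "Suc n - T = n - T" by simp
      thus ?thesis using Suc False by simp
    qed
  qed
  also have "\<dots> \<le> (\<Sum>t<n. g t)" by (rule sum_mono2) (use assms in auto)
  finally show ?thesis .
qed

lemma lp_key:
  fixes N :: "real^'n \<Rightarrow> real" and x y :: "nat \<Rightarrow> real^'n"
  assumes nN: "is_norm N" and c0: "0 \<le> c" and c1: "c < 1" and p1: "p \<ge> 1" and T1: "1 \<le> T"
    and init: "\<forall>t<T. N (x t) \<le> N (y t)"
    and rec: "\<forall>t\<ge>T. N (x t) \<le> c * N (x (t-T)) + N (y t)"
  shows "lpnorm N p x \<le> ereal (1/(1-c)) * lpnorm N p y"
proof -
  define a where "a k = N (x k)" for k
  define b where "b k = N (y k)" for k
  have a0: "0 \<le> a k" for k unfolding a_def using Nge0[OF nN] .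
  have b0: "0 \<le> b k" for k unfolding b_def using Nge0[OF nN] .
  have ia: "\<forall>t<T. a t \<le> b t" using init by (simp add: a_def b_def)
  have ra: "\<forall>t\<ge>T. a t \<le> c * a (t-T) + b t" using rec by (simp add: a_def b_def)
  have cpos: "1/(1-c) > 0" using c1 by simp
  show ?thesis
  proof (cases p)
    case infinity
    have lx: "lpnorm N p x = (SUP k. ereal (a k))" by (simp add: lpnorm_def infinity a_def)
    have ly: "lpnorm N p y = (SUP k. ereal (b k))" by (simp add: lpnorm_def infinity b_def)
    show ?thesis
    proof (cases "(SUP k. ereal (b k)) = \<infinity>")
      case True thus ?thesis using cpos by (simp add: lx ly)
    next
      case False
      have "ereal (b 0) \<le> (SUP k. ereal (b k))" by (rule SUP_upper) simp
      hence ge: "0 \<le> (SUP k. ereal (b k))" using b0[of 0] by (meson ereal_less_eq(5) order_trans)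
      then obtain \<beta> where \<beta>: "(SUP k. ereal (b k)) = ereal \<beta>" using False by (cases "(SUP k. ereal (b k))") auto
      have bb: "b k \<le> \<beta>" for k
      proof -
        have "ereal (b k) \<le> (SUP k. ereal (b k))" by (rule SUP_upper) simp
        thus ?thesis using \<beta> by simp
      qed
      have beta0: "0 \<le> \<beta>" using bb[of 0] b0[of 0] by simp
      have "a t \<le> \<beta> / (1-c)" for t
      proof (induction t rule: less_induct)
        case (less t)
        show ?case
        proof (cases "t < T")
          case True
          have "\<beta> \<le> \<beta> / (1-c)" using beta0 c0 c1 by (simp add: field_simps)
          thus ?thesis using ia True bb[of t] by force
        next
          case False
          hence "t - T < t" "T \<le> t" using assms by auto
          hence "a t \<le> c * a (t-T) + b t" using ra by blast
          also have "\<dots> \<le> c * (\<beta> / (1-c)) + \<beta>"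
            using less.IH[OF \<open>t - T < t\<close>] bb[of t] c0 by (intro add_mono mult_left_mono) auto
          also have "\<dots> = \<beta> / (1-c)" using c1 by (simp add: field_simps)
          finally show ?thesis .
        qed
      qed
      hence "(SUP k. ereal (a k)) \<le> ereal (\<beta> / (1-c))" by (intro SUP_least) simp
      also have "\<dots> = ereal (1/(1-c)) * ereal \<beta>" by simp
      finally show ?thesis using \<beta> by (simp add: lx ly)
    qed
  next
    case (enat q)
    have q1: "1 \<le> q" using p1 enat by (simp add: one_enat_def)
    have lx: "lpnorm N p x = (if summable (\<lambda>k. a k ^ q) then ereal ((\<Sum>k. a k ^ q) powr (1 / real q)) else \<infinity>)"
      by (simp add: lpnorm_def enat a_def)
    have ly: "lpnorm N p y = (if summable (\<lambda>k. b k ^ q) then ereal ((\<Sum>k. b k ^ q) powr (1 / real q)) else \<infinity>)"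
      by (simp add: lpnorm_def enat b_def)
    show ?thesis
    proof (cases "summable (\<lambda>k. b k ^ q)")
      case False thus ?thesis using cpos by (simp add: lx ly)
    next
      case True
      define B where "B = (\<Sum>k. b k ^ q)"
      define K where "K = (1/(1-c)) ^ q"
      have K0: "0 \<le> K" using c1 by (simp add: K_def)
      have B0: "0 \<le> B" unfolding B_def using True b0 by (simp add: suminf_nonneg)
      have cK: "1 \<le> (1-c) * K"
      proof -
        have "(1-c)^q = (1-c) * (1-c)^(q-1)" using q1 by (metis Suc_diff_le diff_Suc_1 power_Suc)
        also have "\<dots> \<le> (1-c) * 1" using c0 c1 by (intro mult_left_mono power_le_one) auto
        finally have "(1-c)^q \<le> 1 - c" by simp
        moreover have "(1-c)^q > 0" using c1 by simp
        ultimately show ?thesis unfolding K_def using c1 by (simp add: power_divide field_simps)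
      qed
      define g where "g t = (if T \<le> t then a (t-T) ^ q else 0)" for t
      have pw: "a t ^ q \<le> c * g t + (1-c) * K * b t ^ q" for t
      proof (cases "T \<le> t")
        case True
        have "a t \<le> c * a (t-T) + (1-c) * (b t / (1-c))" using ra True c1 by simp
        hence "a t ^ q \<le> (c * a (t-T) + (1-c) * (b t / (1-c))) ^ q"
          using a0 by (intro power_mono) auto
        also have "\<dots> \<le> c * a (t-T) ^ q + (1-c) * (b t / (1-c)) ^ q"
          using pow_convex[of "a (t-T)" "b t / (1-c)" c q] a0 b0 c0 c1 by simp
        also have "(b t / (1-c)) ^ q = K * b t ^ q" unfolding K_def by (simp add: power_divide)
        finally show ?thesis using True by (simp add: g_def mult.assoc)
      next
        case False
        have "a t ^ q \<le> b t ^ q" using ia False a0 by (intro power_mono) auto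
        also have "\<dots> \<le> (1-c) * K * b t ^ q" using cK b0[of t] by (metis mult_left_mono mult_1 mult.commute zero_le_power)
        finally show ?thesis using False c0 by (simp add: g_def)
      qed
      have Sn: "(\<Sum>t<n. a t ^ q) \<le> K * B" for n
      proof -
        have "(\<Sum>t<n. a t ^ q) \<le> (\<Sum>t<n. c * g t + (1-c) * K * b t ^ q)" by (rule sum_mono) (rule pw)
        also have "\<dots> = c * (\<Sum>t<n. g t) + (1-c) * K * (\<Sum>t<n. b t ^ q)"
          by (simp add: sum.distrib sum_distrib_left)
        also have "\<dots> \<le> c * (\<Sum>t<n. a t ^ q) + (1-c) * K * B"
        proof (intro add_mono mult_left_mono)
          show "(\<Sum>t<n. g t) \<le> (\<Sum>t<n. a t ^ q)" unfolding g_def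
            using sum_shift_le[where g="\<lambda>s. a s ^ q" and n=n and T=T] a0 by simp
          show "(\<Sum>t<n. b t ^ q) \<le> B" unfolding B_def using True b0 by (intro sum_le_suminf) auto
        qed (use c0 c1 K0 in auto)
        finally have "(1-c) * (\<Sum>t<n. a t ^ q) \<le> (1-c) * (K * B)" by (simp add: algebra_simps)
        thus ?thesis using c1 by simp
      qed
      have sa: "summable (\<lambda>k. a k ^ q)" using Sn a0 by (intro summableI_nonneg_bounded) auto
      have "(\<Sum>k. a k ^ q) \<le> K * B" using Sn sa by (intro suminf_le_const) auto
      hence "(\<Sum>k. a k ^ q) powr (1 / real q) \<le> (K * B) powr (1 / real q)"
        using sa a0 by (intro powr_mono2) (auto intro: suminf_nonneg)
      also have "\<dots> = K powr (1 / real q) * B powr (1 / real q)" using K0 B0 by (simp add: powr_mult)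
      also have "K powr (1 / real q) = 1/(1-c)" unfolding K_def using pow_powr_inv[of "1/(1-c)" q] c1 q1 by simp
      finally show ?thesis using sa True by (simp add: lx ly B_def)
    qed
  qed
qed


lemma lp_ge:
  fixes N :: "real^'n \<Rightarrow> real" and x :: "nat \<Rightarrow> real^'n"
  assumes nN: "is_norm N" and p1: "p \<ge> 1"
  shows "ereal (N (x t)) \<le> lpnorm N p x"
proof (cases p)
  case infinity thus ?thesis by (simp add: lpnorm_def) (rule SUP_upper, simp)
next
  case (enat q)
  have q1: "1 \<le> q" using p1 enat by (simp add: one_enat_def)
  show ?thesis
  proof (cases "summable (\<lambda>k. N (x k) ^ q)")
    case False thus ?thesis by (simp add: lpnorm_def enat)
  next
    case True
    have "N (x t) ^ q \<le> (\<Sum>k. N (x k) ^ q)"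
      using sum_le_suminf[OF True, of "{t}"] Nge0[OF nN] by simp
    hence "(N (x t) ^ q) powr (1 / real q) \<le> (\<Sum>k. N (x k) ^ q) powr (1 / real q)"
      using Nge0[OF nN] by (intro powr_mono2) auto
    thus ?thesis using True pow_powr_inv[of "N (x t)" q] Nge0[OF nN] q1 by (simp add: lpnorm_def enat)
  qed
qed

theorem mainTheorem9:
  fixes N :: "real^'n \<Rightarrow> real"
    and A :: "real^'n^'n"
    and T :: nat
    and W :: "(real^'n) set"
    and sat :: "real^'n \<Rightarrow> real^'n"
    and p :: enat
    and w what :: "nat \<Rightarrow> real^'n"
  assumes normN: "is_norm N"
    and T1: "T \<ge> 1"
    and Wcl: "closed W" and Wcvx: "convex W" and W0: "0 \<in> W"
    and sat_in: "\<forall>v. sat v \<in> W"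
    and sat_min: "\<forall>v v'. v + v' \<in> W \<longrightarrow> N (sat v - v) \<le> N v'"
    and eta_pos: "etabar N W > 0"
    and p1: "p \<ge> 1"
    and hat_init: "\<forall>t < T. what t = w t"
    and hat_rec: "\<forall>t \<ge> T. what t = matpow A T *v (what (t - T) - sat (what (t - T))) + w t"
  shows "(\<forall>\<gamma>::real. 0 \<le> \<gamma> \<and> \<gamma> < min 1 (opnorm N (matpow A T)) \<longrightarrow>
            lpnorm N p w \<le> ereal ((1 - \<gamma>) * opnorm N (matpow A T) / (opnorm N (matpow A T) - \<gamma>)) * etabar N W
            \<longrightarrow> lpnorm N p what \<le> ereal (1 / (1 - \<gamma>)) * lpnorm N p w)
       \<and> (opnorm N (matpow A T) < 1 \<longrightarrow> lpnorm N p w < \<infinity> \<longrightarrow>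
            lpnorm N p what \<le> ereal (1 / (1 - opnorm N (matpow A T))) * lpnorm N p w)"
proof -
  define M where "M = matpow A T"
  define m where "m = opnorm N M"
  define d where "d v = N (v - sat v)" for v
  have m0: "0 \<le> m" unfolding m_def by (rule opnorm_ge0[OF normN])
  have Nge: "0 \<le> N v" for v by (rule Nge0[OF normN])
  have dN: "d v \<le> N v" for v
  proof -
    have "v + (- v) \<in> W" using W0 by simp
    hence "N (sat v - v) \<le> N (- v)" using sat_min by blast
    thus ?thesis unfolding d_def using Nminus[OF normN, of v] Ndiff[OF normN, of v "sat v"] by simp
  qed
  have d0: "d v \<ge> 0" for v unfolding d_def by (rule Nge)
  have inW: "d v = 0" if "v \<in> W" for v
  proof -
    have "v + 0 \<in> W" using that by simp
    hence "N (sat v - v) \<le> N 0" using sat_min by blast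
    thus ?thesis unfolding d_def using N0[OF normN] Ndiff[OF normN, of v "sat v"] d0[of v] d_def by simp
  qed
  have recb: "N (what t) \<le> m * d (what (t - T)) + N (w t)" if "t \<ge> T" for t
  proof -
    have "what t = M *v (what (t - T) - sat (what (t - T))) + w t"
      using hat_rec that unfolding M_def by blast
    hence "N (what t) = N (M *v (what (t - T) - sat (what (t - T))) + w t)" by simp
    also have "\<dots> \<le> N (M *v (what (t - T) - sat (what (t - T)))) + N (w t)" by (rule Ntri[OF normN])
    finally have "N (what t) \<le> N (M *v (what (t - T) - sat (what (t - T)))) + N (w t)" .
    also have "N (M *v (what (t - T) - sat (what (t - T)))) \<le> m * d (what (t - T))"
      unfolding m_def d_def by (rule opnorm_le[OF normN])
    finally show ?thesis by simp
  qed
  have initb: "\<forall>t<T. N (what t) \<le> N (w t)" using hat_init by simp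
  have part2: "lpnorm N p what \<le> ereal (1 / (1 - m)) * lpnorm N p w" if "m < 1"
  proof (rule lp_key[OF normN m0 that p1 T1 initb])
    show "\<forall>t\<ge>T. N (what t) \<le> m * N (what (t - T)) + N (w t)"
    proof (intro allI impI)
      fix t assume "T \<le> t"
      hence "N (what t) \<le> m * d (what (t - T)) + N (w t)" by (rule recb)
      also have "m * d (what (t - T)) \<le> m * N (what (t - T))" by (rule mult_left_mono[OF dN m0])
      finally show "N (what t) \<le> m * N (what (t - T)) + N (w t)" by simp
    qed
  qed
  have part1: "lpnorm N p what \<le> ereal (1 / (1 - \<gamma>)) * lpnorm N p w"
    if g0: "0 \<le> \<gamma>" and g1: "\<gamma> < 1" and gm: "\<gamma> < m"
      and hyp: "lpnorm N p w \<le> ereal ((1 - \<gamma>) * m / (m - \<gamma>)) * etabar N W" for \<gamma>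
  proof (rule lp_key[OF normN g0 g1 p1 T1 initb])
    show "\<forall>t\<ge>T. N (what t) \<le> \<gamma> * N (what (t - T)) + N (w t)"
    proof (cases "etabar N W = \<infinity>")
      case True
      have "d v = 0" for v
      proof -
        have "ereal (N v) < etabar N W" using True by simp
        then obtain z where "z \<in> {ereal \<eta> | \<eta>. \<eta> \<ge> 0 \<and> {w. N w < \<eta>} \<subseteq> W}" "ereal (N v) < z"
          unfolding etabar_def using less_Sup_iff by blast
        then obtain \<eta> where "{w. N w < \<eta>} \<subseteq> W" "N v < \<eta>" by auto
        hence "v \<in> W" by blast
        thus ?thesis by (rule inW)
      qed
      show ?thesis
      proof (intro allI impI)
        fix t assume "T \<le> t"
        hence "N (what t) \<le> m * d (what (t - T)) + N (w t)" by (rule recb)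
        moreover have "0 \<le> \<gamma> * N (what (t - T))" using g0 Nge by simp
        ultimately show "N (what t) \<le> \<gamma> * N (what (t - T)) + N (w t)" using \<open>\<And>v. d v = 0\<close> by simp
      qed
    next
      case False
      then obtain e where e: "etabar N W = ereal e" "e > 0" using eta_pos
        by (cases "etabar N W") auto
      define R where "R = m * e / (m - \<gamma>)"
      have R0: "0 \<le> R" unfolding R_def using m0 gm e by simp
      have wb: "N (w t) \<le> (1 - \<gamma>) * R" for t
      proof -
        have h2: "lpnorm N p w \<le> ereal ((1 - \<gamma>) * m / (m - \<gamma>) * e)" using hyp e by simp
        have "ereal (N (w t)) \<le> ereal ((1 - \<gamma>) * m / (m - \<gamma>) * e)"
          by (rule order_trans[OF lp_ge[OF normN p1] h2])
        thus ?thesis unfolding R_def by simp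
      qed
      have ex: "\<exists>\<eta>. {w. N w < \<eta>} \<subseteq> W \<and> t < \<eta>" if "t < e" for t
      proof -
        have "ereal t < etabar N W" using e that by simp
        then obtain z where "z \<in> {ereal \<eta> | \<eta>. \<eta> \<ge> 0 \<and> {w. N w < \<eta>} \<subseteq> W}" "ereal t < z"
          unfolding etabar_def using less_Sup_iff by blast
        thus ?thesis by auto
      qed
      have db: "m * d v \<le> \<gamma> * N v" if vR: "N v \<le> R" for v
      proof (cases "N v < e")
        case True
        then obtain \<eta> where "{w. N w < \<eta>} \<subseteq> W" "N v < \<eta>" using ex by blast
        hence "d v = 0" using inW by blast
        thus ?thesis using g0 Nge by simp
      next
        case False
        hence nv: "N v \<ge> e" by simp
        have "d v \<le> N v - e"
        proof (rule field_le_epsilon)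
          fix \<epsilon> :: real assume "0 < \<epsilon>"
          show "d v \<le> N v - e + \<epsilon>"
          proof (cases "\<epsilon> < e")
            case False thus ?thesis using dN[of v] by simp
          next
            case True
            define t where "t = e - \<epsilon>"
            have t: "0 < t" "t < e" using True \<open>0 < \<epsilon>\<close> by (auto simp: t_def)
            obtain \<eta> where eta: "{w. N w < \<eta>} \<subseteq> W" "t < \<eta>" using ex[OF t(2)] by blast
            have nvp: "N v > 0" using nv e by simp
            define u where "u = (t / N v) *\<^sub>R v"
            have "N u = t" unfolding u_def using nvp t by (simp add: Nscale[OF normN])
            hence "u \<in> W" using eta by auto
            hence "v + (u - v) \<in> W" by simp
            hence "N (sat v - v) \<le> N (u - v)" using sat_min by blast
            moreover have "u - v = (t / N v - 1) *\<^sub>R v" unfolding u_def by (simp add: algebra_simps)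
            moreover have "\<bar>t / N v - 1\<bar> * N v = N v - t" using nvp t nv by (simp add: field_simps abs_if)
            ultimately have "N (sat v - v) \<le> N v - t" by (simp add: Nscale[OF normN])
            thus ?thesis unfolding d_def t_def using Ndiff[OF normN, of v "sat v"] by simp
          qed
        qed
        hence "m * d v \<le> m * (N v - e)" using m0 by (rule mult_left_mono)
        also have "\<dots> \<le> \<gamma> * N v"
        proof -
          have "(m - \<gamma>) * N v \<le> m * e" using vR gm unfolding R_def by (simp add: field_simps)
          thus ?thesis by (simp add: algebra_simps)
        qed
        finally show ?thesis .
      qed
      have allR: "N (what t) \<le> R" for t
      proof (induction t rule: less_induct)
        case (less t)
        show ?case
        proof (cases "t < T")
          case True
          hence "N (what t) = N (w t)" using hat_init by simp
          also have "\<dots> \<le> (1 - \<gamma>) * R" by (rule wb)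
          also have "\<dots> \<le> R" proof -
            have "0 \<le> \<gamma> * R" using g0 R0 by simp
            thus ?thesis by (simp add: algebra_simps)
          qed
          finally show ?thesis .
        next
          case False
          hence tT: "t - T < t" "T \<le> t" using T1 by auto
          have "N (what t) \<le> m * d (what (t - T)) + N (w t)" using recb tT by blast
          also have "\<dots> \<le> \<gamma> * N (what (t - T)) + (1 - \<gamma>) * R"
            using db[OF less.IH[OF tT(1)]] wb[of t] by simp
          also have "\<dots> \<le> \<gamma> * R + (1 - \<gamma>) * R"
            using less.IH[OF tT(1)] g0 by (simp add: mult_left_mono)
          finally show ?thesis by (simp add: algebra_simps)
        qed
      qed
      show ?thesis
      proof (intro allI impI)
        fix t assume "T \<le> t"
        hence "N (what t) \<le> m * d (what (t - T)) + N (w t)" by (rule recb)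
        thus "N (what t) \<le> \<gamma> * N (what (t - T)) + N (w t)" using db[OF allR, of "t - T"] by linarith
      qed
    qed
  qed
  have mm: "opnorm N (matpow A T) = m" by (simp add: m_def M_def)
  show ?thesis unfolding mm
  proof (intro conjI allI impI)
    fix \<gamma> :: real
    assume a: "0 \<le> \<gamma> \<and> \<gamma> < min 1 m"
      and b: "lpnorm N p w \<le> ereal ((1 - \<gamma>) * m / (m - \<gamma>)) * etabar N W"
    show "lpnorm N p what \<le> ereal (1 / (1 - \<gamma>)) * lpnorm N p w"
      using a by (intro part1[OF _ _ _ b]) auto
  next
    assume "m < 1"
    thus "lpnorm N p what \<le> ereal (1 / (1 - m)) * lpnorm N p w" by (rule part2)
  qed
qed

end
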